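(* For every set of formulas $\Gamma$ and every formula $\alpha$: if $\Gamma\vdash_{L_1^0}\alpha$ then $\Gamma\vDash_{\mathcal{M}_1^0}\alpha$.
   Context: Formulas are built from a countable set of propositional variables using the unary connectives $\neg$ (negation) and $\circ$ (consistency) and the binary connectives $\land,\lor,\to$. Write $\circ^0\alpha=\alpha$, $\circ^{m+1}\alpha=\circ(\circ^m\alpha)$. The Hilbert calculus mbC has as axiom schemas those of a standard axiomatization of positive classical propositional logic in $\land,\lor,\to$, plus (TND) $\alpha\lor\neg\alpha$ and (bc1) $\circ\alpha\to(\alpha\to(\neg\alpha\to\beta))$; its only rule is modus ponens. mbCciw is mbC plus (ciw) $\circ\alpha\lor(\alpha\land\neg\alpha)$. $L_1^0$ is mbCciw plus the schema $\circ\circ\circ\alpha$. $\Gamma\vdash_L\alpha$ means $\alpha$ is derivable from $\Gamma$ in $L$. Semantics: on $\{0,1\}$ use the Boolean operations $\land,\lor,\to,\sim$ (complement). Let $\mathbb{B}_1^0=\{x=(x_1,x_2,x_3)\in\{0,1\}^3: x_1\lor x_2=1 \text{ and } x_3\lor\sim(x_1\land x_2)=1\}$. The multialgebra $\mathcal{B}_1^0$ on $\mathbb{B}_1^0$ has multioperations $x\# y=\{z\in\mathbb{B}_1^0: z_1=x_1\# y_1\}$ for $\#\in\{\land,\lor,\to\}$, $\neg x=\{z\in\mathbb{B}_1^0: z_1=x_2\}$, $\circ x=\{(\sim(x_1\land x_2),\,x_3,\,x_3\land\sim(x_1\land x_2))\}$. Designated set $D_1^0=\{x: x_1=1\}$;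 $\mathcal{M}_1^0=(\mathcal{B}_1^0,D_1^0)$. A valuation over $\mathcal{M}_1^0$ is a map $h$ from formulas to $\mathbb{B}_1^0$ with $h(\alpha\#\beta)\in h(\alpha)\# h(\beta)$, $h(\neg\alpha)\in\neg h(\alpha)$, $h(\circ\alpha)\in\circ h(\alpha)$. $\Gamma\vDash_{\mathcal{M}_1^0}\alpha$ iff every valuation $h$ with $h[\Gamma]\subseteq D_1^0$ has $h(\alpha)\in D_1^0$. *)

theory Defs
  imports Main
begin

datatype fm =
    Var nat
  | Neg fm
  | Circ fm
  | And fm fm
  | Or fm fm
  | Imp fm fm

inductive is_axiom :: "fm \<Rightarrow> bool" where
  Ax1: "is_axiom (Imp a (Imp b a))"
| Ax2: "is_axiom (Imp (Imp a b) (Imp (Imp a (Imp b c)) (Imp a c)))"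
| Ax3: "is_axiom (Imp a (Imp b (And a b)))"
| Ax4: "is_axiom (Imp (And a b) a)"
| Ax5: "is_axiom (Imp (And a b) b)"
| Ax6: "is_axiom (Imp a (Or a b))"
| Ax7: "is_axiom (Imp b (Or a b))"
| Ax8: "is_axiom (Imp (Imp a c) (Imp (Imp b c) (Imp (Or a b) c)))"
| Ax9: "is_axiom (Or a (Imp a b))"
| TND: "is_axiom (Or a (Neg a))"
| bc1: "is_axiom (Imp (Circ a) (Imp a (Imp (Neg a) b)))"
| ciw: "is_axiom (Or (Circ a) (And a (Neg a)))"
| circ3: "is_axiom (Circ (Circ (Circ a)))"

inductive derivable :: "fm set \<Rightarrow> fm \<Rightarrow> bool" where
  hyp: "a \<in> \<Gamma> \<Longrightarrow> derivable \<Gamma> a"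
| ax: "is_axiom a \<Longrightarrow> derivable \<Gamma> a"
| mp: "derivable \<Gamma> a \<Longrightarrow> derivable \<Gamma> (Imp a b) \<Longrightarrow> derivable \<Gamma> b"

type_synonym tri = "bool \<times> bool \<times> bool"

definition B10 :: "tri set" where
  "B10 = {(x1, x2, x3). (x1 \<or> x2) \<and> (x3 \<or> \<not> (x1 \<and> x2))}"

definition m_and :: "tri \<Rightarrow> tri \<Rightarrow> tri set" where
  "m_and x y = {z \<in> B10. fst z = (fst x \<and> fst y)}"

definition m_or :: "tri \<Rightarrow> tri \<Rightarrow> tri set" where
  "m_or x y = {z \<in> B10. fst z = (fst x \<or> fst y)}"

definition m_imp :: "tri \<Rightarrow> tri \<Rightarrow> tri set" where
  "m_imp x y = {z \<in> B10. fst z = (fst x \<longrightarrow> fst y)}"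

definition m_neg :: "tri \<Rightarrow> tri set" where
  "m_neg x = {z \<in> B10. fst z = fst (snd x)}"

definition m_circ :: "tri \<Rightarrow> tri set" where
  "m_circ x = (case x of (x1, x2, x3) \<Rightarrow> {(\<not> (x1 \<and> x2), x3, x3 \<and> \<not> (x1 \<and> x2))})"

definition D10 :: "tri set" where
  "D10 = {x \<in> B10. fst x}"

definition valuation :: "(fm \<Rightarrow> tri) \<Rightarrow> bool" where
  "valuation h \<longleftrightarrow>
     (\<forall>a. h a \<in> B10) \<and>
     (\<forall>a b. h (And a b) \<in> m_and (h a) (h b)) \<and>
     (\<forall>a b. h (Or a b) \<in> m_or (h a) (h b)) \<and>
     (\<forall>a b. h (Imp a b) \<in> m_imp (h a) (h b)) \<and>
     (\<forall>a. h (Neg a) \<in> m_neg (h a)) \<and>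
     (\<forall>a. h (Circ a) \<in> m_circ (h a))"

definition entails :: "fm set \<Rightarrow> fm \<Rightarrow> bool" where
  "entails \<Gamma> a \<longleftrightarrow> (\<forall>h. valuation h \<longrightarrow> h ` \<Gamma> \<subseteq> D10 \<longrightarrow> h a \<in> D10)"

end

theory Submission
  imports Defs
begin

lemma val_fst:
  assumes "valuation h"
  shows "fst (h (And a b)) = (fst (h a) \<and> fst (h b))"
    "fst (h (Or a b)) = (fst (h a) \<or> fst (h b))"
    "fst (h (Imp a b)) = (fst (h a) \<longrightarrow> fst (h b))"
    "fst (h (Neg a)) = fst (snd (h a))"
    "h (Circ a) = (case h a of (x1, x2, x3) \<Rightarrow> (\<not> (x1 \<and> x2), x3, x3 \<and> \<not> (x1 \<and> x2)))"
    "h a \<in> B10"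
  using assms unfolding valuation_def m_and_def m_or_def m_imp_def m_neg_def m_circ_def
  by (auto split: prod.splits)

lemma ax_sound:
  assumes "valuation h" "is_axiom a"
  shows "fst (h a)"
  using assms(2)
proof cases
  case (TND c)
  then show ?thesis using val_fst[OF assms(1)] val_fst(6)[OF assms(1), of c]
    by (cases "h c") (auto simp: B10_def)
next
  case (bc1 c d)
  then show ?thesis using val_fst[OF assms(1)]
    by (cases "h c") auto
next
  case (ciw c)
  then show ?thesis using val_fst[OF assms(1)]
    by (cases "h c") auto
next
  case (circ3 c)
  then show ?thesis using val_fst[OF assms(1), of c] val_fst[OF assms(1), of "Circ c"]
     val_fst[OF assms(1), of "Circ (Circ c)"]
    by (cases "h c") (auto simp: B10_def)
qed (use val_fst[OF assms(1)] in auto)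

lemma deriv_sound:
  assumes "derivable G a" "valuation h" "h ` G \<subseteq> D10"
  shows "fst (h a)"
  using assms
proof (induction rule: derivable.induct)
  case (hyp a G) then show ?case by (auto simp: D10_def)
next
  case (ax a G) then show ?case using ax_sound by blast
next
  case (mp G a b) then show ?case using val_fst[OF mp.prems(1)] by auto
qed

theorem theorem2:
  fixes \<Gamma> :: "fm set" and \<alpha> :: fm
  assumes "derivable \<Gamma> \<alpha>"
  shows "entails \<Gamma> \<alpha>"
  unfolding entails_def
proof (intro allI impI)
  fix h assume v: "valuation h" and g: "h ` \<Gamma> \<subseteq> D10"
  have "fst (h \<alpha>)" using deriv_sound[OF assms v g] .
  then show "h \<alpha> \<in> D10" using val_fst(6)[OF v] by (auto simp: D10_def)
qed

end
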